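(* Let $(\mathbf{F},\Delta)$ be a poset comonoid and $(\mathbf{F},\Box)$ a poset monoid on the same poset species which form an adjoint pair with $\Delta\dashv\Box$. Let $I$ be a finite set and $x\in\mathbf{F}[I]$. The inverted basis element $\omega_x=\sum_{x\le y}\mu(x,y)\,y\in\mathbf{k}\mathbf{F}[I]$ is primitive if and only if $x$ is indecomposable in the monoid $(\mathbf{F},\Box)$. Moreover, the set $\{\omega_x: x\in\mathbf{F}[I],\ x\ \text{is }\Box\text{-indecomposable}\}$ is a basis of the space $\mathcal{P}(\mathbf{k}\mathbf{F})[I]$ of primitive elements of $\mathbf{k}\mathbf{F}[I]$.
   Context: $\mathbf{k}$ is a field of characteristic $0$. A (connected) poset species $\mathbf{F}$ assigns to each finite set $I$ a locally finite poset $\mathbf{F}[I]$, with $\mathbf{F}[\emptyset]$ a singleton $\{1\}$, and to each bijection an order-preserving bijection, functorially. A poset monoid $(\mathbf{F},\Box)$: order-preserving maps $\Box_{S,T}:\mathbf{F}[S]\times\mathbf{F}[T]\to\mathbf{F}[S\sqcup T]$, natural, associative, unital with unit $1$. A poset comonoid $(\mathbf{F},\Delta)$: order-preserving maps $\Delta_{S,T}:\mathbf{F}[S\sqcup T]\to\mathbf{F}[S]\times\mathbf{F}[T]$, natural, coassociative, counital. Adjoint pair $\Delta\dashv\Box$: $\Delta_{S,T}(x)\le(y,z)\iff x\le\Box_{S,T}(y,z)$ for all $x,y,z$ (product order). $\mathbf{k}\mathbf{F}[I]$ is the vector space with basis $\mathbf{F}[I]$, and $\Delta_{S,T}$ extends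 linearly to $\mathbf{k}\mathbf{F}[S\sqcup T]\to\mathbf{k}\mathbf{F}[S]\otimes\mathbf{k}\mathbf{F}[T]$. $\mu$ is the Möbius function of $\mathbf{F}[I]$. An element $x\in\mathbf{F}[I]$ is $\Box$-indecomposable if there is no decomposition $I=S\sqcup T$ with $S,T$ nonempty and $y\in\mathbf{F}[S]$, $z\in\mathbf{F}[T]$ such that $x=\Box_{S,T}(y,z)$. An element $p\in\mathbf{k}\mathbf{F}[I]$ is primitive if $\Delta_{S,T}(p)=0$ for all decompositions $I=S\sqcup T$ with $S,T$ nonempty. *)

theory Defs
  imports Complex_Main "HOL-Library.Function_Algebras"
begin

(* Encoding of a poset species F on finite sets of labels of type 'l:
   Fc I       : the underlying set F[I]  (elements of a common type 'x)
   Fle I      : the partial order on F[I]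
   Fact s I   : F[s] : F[I] -> F[s ` I] for a bijection s from I onto s ` I
   e          : the unique element 1 of F[{}] *)

definition poset_species ::
  "('l set \<Rightarrow> 'x set) \<Rightarrow> ('l set \<Rightarrow> 'x \<Rightarrow> 'x \<Rightarrow> bool)
   \<Rightarrow> (('l \<Rightarrow> 'l) \<Rightarrow> 'l set \<Rightarrow> 'x \<Rightarrow> 'x) \<Rightarrow> 'x \<Rightarrow> bool" where
  "poset_species Fc Fle Fact e \<longleftrightarrow>
     (\<forall>I. finite I \<longrightarrow>
        (\<forall>x\<in>Fc I. Fle I x x) \<and>
        (\<forall>x\<in>Fc I. \<forall>y\<in>Fc I. Fle I x y \<longrightarrow> Fle I y x \<longrightarrow> x = y) \<and>
        (\<forall>x\<in>Fc I. \<forall>y\<in>Fc I. \<forall>z\<in>Fc I. Fle I x y \<longrightarrow> Fle I y z \<longrightarrow> Fle I x z) \<and>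
        (\<forall>x\<in>Fc I. \<forall>y\<in>Fc I. finite {z\<in>Fc I. Fle I x z \<and> Fle I z y})) \<and>
     Fc {} = {e} \<and>
     (\<forall>I s. finite I \<longrightarrow> inj_on s I \<longrightarrow>
        (\<forall>x\<in>Fc I. Fact s I x \<in> Fc (s ` I)) \<and>
        (\<forall>x\<in>Fc I. \<forall>y\<in>Fc I. Fle I x y \<longrightarrow> Fle (s ` I) (Fact s I x) (Fact s I y))) \<and>
     (\<forall>I s t. finite I \<longrightarrow> (\<forall>i\<in>I. s i = t i) \<longrightarrow> (\<forall>x\<in>Fc I. Fact s I x = Fact t I x)) \<and>
     (\<forall>I. finite I \<longrightarrow> (\<forall>x\<in>Fc I. Fact id I x = x)) \<and>
     (\<forall>I s t. finite I \<longrightarrow> inj_on s I \<longrightarrow> inj_on t (s ` I) \<longrightarrow>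
        (\<forall>x\<in>Fc I. Fact (t \<circ> s) I x = Fact t (s ` I) (Fact s I x)))"

definition poset_monoid ::
  "('l set \<Rightarrow> 'x set) \<Rightarrow> ('l set \<Rightarrow> 'x \<Rightarrow> 'x \<Rightarrow> bool)
   \<Rightarrow> (('l \<Rightarrow> 'l) \<Rightarrow> 'l set \<Rightarrow> 'x \<Rightarrow> 'x) \<Rightarrow> 'x
   \<Rightarrow> ('l set \<Rightarrow> 'l set \<Rightarrow> 'x \<Rightarrow> 'x \<Rightarrow> 'x) \<Rightarrow> bool" where
  "poset_monoid Fc Fle Fact e mul \<longleftrightarrow>
     poset_species Fc Fle Fact e \<and>
     (\<forall>S T. finite S \<longrightarrow> finite T \<longrightarrow> S \<inter> T = {} \<longrightarrow>
        (\<forall>y\<in>Fc S. \<forall>z\<in>Fc T. mul S T y z \<in> Fc (S \<union> T)) \<and>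
        (\<forall>y\<in>Fc S. \<forall>z\<in>Fc T. \<forall>y'\<in>Fc S. \<forall>z'\<in>Fc T.
            Fle S y y' \<longrightarrow> Fle T z z' \<longrightarrow> Fle (S \<union> T) (mul S T y z) (mul S T y' z')) \<and>
        (\<forall>s. inj_on s (S \<union> T) \<longrightarrow> (\<forall>y\<in>Fc S. \<forall>z\<in>Fc T.
            Fact s (S \<union> T) (mul S T y z) = mul (s ` S) (s ` T) (Fact s S y) (Fact s T z))) \<and>
        (\<forall>y\<in>Fc S. mul S {} y e = y) \<and>
        (\<forall>z\<in>Fc T. mul {} T e z = z)) \<and>
     (\<forall>R S T. finite R \<longrightarrow> finite S \<longrightarrow> finite T \<longrightarrow>
        R \<inter> S = {} \<longrightarrow> R \<inter> T = {} \<longrightarrow> S \<inter> T = {} \<longrightarrow>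
        (\<forall>x\<in>Fc R. \<forall>y\<in>Fc S. \<forall>z\<in>Fc T.
           mul (R \<union> S) T (mul R S x y) z = mul R (S \<union> T) x (mul S T y z)))"

definition poset_comonoid ::
  "('l set \<Rightarrow> 'x set) \<Rightarrow> ('l set \<Rightarrow> 'x \<Rightarrow> 'x \<Rightarrow> bool)
   \<Rightarrow> (('l \<Rightarrow> 'l) \<Rightarrow> 'l set \<Rightarrow> 'x \<Rightarrow> 'x) \<Rightarrow> 'x
   \<Rightarrow> ('l set \<Rightarrow> 'l set \<Rightarrow> 'x \<Rightarrow> 'x \<times> 'x) \<Rightarrow> bool" where
  "poset_comonoid Fc Fle Fact e comul \<longleftrightarrow>
     poset_species Fc Fle Fact e \<and>
     (\<forall>S T. finite S \<longrightarrow> finite T \<longrightarrow> S \<inter> T = {} \<longrightarrow>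
        (\<forall>x\<in>Fc (S \<union> T). fst (comul S T x) \<in> Fc S \<and> snd (comul S T x) \<in> Fc T) \<and>
        (\<forall>x\<in>Fc (S \<union> T). \<forall>x'\<in>Fc (S \<union> T). Fle (S \<union> T) x x' \<longrightarrow>
            Fle S (fst (comul S T x)) (fst (comul S T x')) \<and>
            Fle T (snd (comul S T x)) (snd (comul S T x'))) \<and>
        (\<forall>s. inj_on s (S \<union> T) \<longrightarrow> (\<forall>x\<in>Fc (S \<union> T).
            comul (s ` S) (s ` T) (Fact s (S \<union> T) x) =
              map_prod (Fact s S) (Fact s T) (comul S T x))) \<and>
        (\<forall>x\<in>Fc S. comul S {} x = (x, e)) \<and>
        (\<forall>x\<in>Fc T. comul {} T x = (e, x))) \<and>
     (\<forall>R S T. finite R \<longrightarrow> finite S \<longrightarrow> finite T \<longrightarrow>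
        R \<inter> S = {} \<longrightarrow> R \<inter> T = {} \<longrightarrow> S \<inter> T = {} \<longrightarrow>
        (\<forall>x\<in>Fc (R \<union> S \<union> T).
           map_prod (comul R S) id (comul (R \<union> S) T x) =
           (let (a, b) = comul R (S \<union> T) x; (c, d) = comul S T b in ((a, c), d))))"

definition adjoint_pair ::
  "('l set \<Rightarrow> 'x set) \<Rightarrow> ('l set \<Rightarrow> 'x \<Rightarrow> 'x \<Rightarrow> bool)
   \<Rightarrow> ('l set \<Rightarrow> 'l set \<Rightarrow> 'x \<Rightarrow> 'x \<times> 'x)
   \<Rightarrow> ('l set \<Rightarrow> 'l set \<Rightarrow> 'x \<Rightarrow> 'x \<Rightarrow> 'x) \<Rightarrow> bool" where
  "adjoint_pair Fc Fle comul mul \<longleftrightarrow>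
     (\<forall>S T. finite S \<longrightarrow> finite T \<longrightarrow> S \<inter> T = {} \<longrightarrow>
        (\<forall>x\<in>Fc (S \<union> T). \<forall>y\<in>Fc S. \<forall>z\<in>Fc T.
           (Fle S (fst (comul S T x)) y \<and> Fle T (snd (comul S T x)) z)
             \<longleftrightarrow> Fle (S \<union> T) x (mul S T y z)))"

definition mobius :: "('x \<Rightarrow> 'x \<Rightarrow> bool) \<Rightarrow> 'x set \<Rightarrow> 'x \<Rightarrow> 'x \<Rightarrow> 'k::ring_1" where
  "mobius le C = (THE f. \<forall>a b. f a b =
      (if a \<in> C \<and> b \<in> C \<and> le a b then
         (if a = b then 1 else - (\<Sum>z\<in>{z\<in>C. le a z \<and> le z b \<and> z \<noteq> b}. f a z))
       else 0))"

text \<open>The vector space kF[I]: finitely supported k-valued functions on F[I]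
  (the coefficient vectors w.r.t. the basis F[I]).\<close>
definition kF :: "('l set \<Rightarrow> 'x set) \<Rightarrow> 'l set \<Rightarrow> ('x \<Rightarrow> 'k::zero) set" where
  "kF Fc I = {p. finite {x. p x \<noteq> 0} \<and> {x. p x \<noteq> 0} \<subseteq> Fc I}"

text \<open>Linear extension of comul S T to kF[S \<union> T] -> kF[S] \<otimes> kF[T], the tensor product being
  represented by coefficient functions on F[S] x F[T] (basis y \<otimes> z).\<close>
definition comul_lin ::
  "('l set \<Rightarrow> 'l set \<Rightarrow> 'x \<Rightarrow> 'x \<times> 'x) \<Rightarrow> 'l set \<Rightarrow> 'l set \<Rightarrow> ('x \<Rightarrow> 'k::comm_monoid_add)
   \<Rightarrow> ('x \<times> 'x \<Rightarrow> 'k)" where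
  "comul_lin comul S T p = (\<lambda>yz. \<Sum>x\<in>{x. p x \<noteq> 0 \<and> comul S T x = yz}. p x)"

definition primitive ::
  "('l set \<Rightarrow> 'x set) \<Rightarrow> ('l set \<Rightarrow> 'l set \<Rightarrow> 'x \<Rightarrow> 'x \<times> 'x) \<Rightarrow> 'l set
   \<Rightarrow> ('x \<Rightarrow> 'k::comm_monoid_add) \<Rightarrow> bool" where
  "primitive Fc comul I p \<longleftrightarrow> p \<in> kF Fc I \<and>
     (\<forall>S T. S \<noteq> {} \<longrightarrow> T \<noteq> {} \<longrightarrow> S \<inter> T = {} \<longrightarrow> S \<union> T = I \<longrightarrow>
        comul_lin comul S T p = (\<lambda>_. 0))"

definition box_indecomposable ::
  "('l set \<Rightarrow> 'x set) \<Rightarrow> ('l set \<Rightarrow> 'l set \<Rightarrow> 'x \<Rightarrow> 'x \<Rightarrow> 'x) \<Rightarrow> 'l set \<Rightarrow> 'x \<Rightarrow> bool" where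
  "box_indecomposable Fc mul I x \<longleftrightarrow>
     \<not> (\<exists>S T y z. S \<noteq> {} \<and> T \<noteq> {} \<and> S \<inter> T = {} \<and> S \<union> T = I \<and>
           y \<in> Fc S \<and> z \<in> Fc T \<and> x = mul S T y z)"

definition omega ::
  "('l set \<Rightarrow> 'x set) \<Rightarrow> ('l set \<Rightarrow> 'x \<Rightarrow> 'x \<Rightarrow> bool) \<Rightarrow> 'l set \<Rightarrow> 'x \<Rightarrow> ('x \<Rightarrow> 'k::ring_1)" where
  "omega Fc Fle I x = (\<lambda>y. if y \<in> Fc I \<and> Fle I x y then mobius (Fle I) (Fc I) x y else 0)"

definition fscale :: "'k::times \<Rightarrow> ('x \<Rightarrow> 'k) \<Rightarrow> ('x \<Rightarrow> 'k)" where
  "fscale c p = (\<lambda>y. c * p y)"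

end

theory Submission
  imports Defs
begin


locale lfpo =
  fixes le :: "'x \<Rightarrow> 'x \<Rightarrow> bool" and C :: "'x set"
  assumes po_refl: "\<And>x. x \<in> C \<Longrightarrow> le x x"
    and antisym: "\<And>x y. x \<in> C \<Longrightarrow> y \<in> C \<Longrightarrow> le x y \<Longrightarrow> le y x \<Longrightarrow> x = y"
    and trans: "\<And>x y z. x \<in> C \<Longrightarrow> y \<in> C \<Longrightarrow> z \<in> C \<Longrightarrow> le x y \<Longrightarrow> le y z \<Longrightarrow> le x z"
    and lfin: "\<And>x y. x \<in> C \<Longrightarrow> y \<in> C \<Longrightarrow> finite {z\<in>C. le x z \<and> le z y}"
begin

definition itv where "itv a b = (if a \<in> C \<and> b \<in> C then {z\<in>C. le a z \<and> le z b} else {})"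

lemma itv_fin: "finite (itv a b)"
  using lfin unfolding itv_def by auto

lemma itv_less:
  assumes "z \<in> itv a b" "z \<noteq> b"
  shows "card (itv a z) < card (itv a b)"
proof -
  have abz: "a \<in> C" "b \<in> C" "z \<in> C" "le a z" "le z b"
    using assms(1) unfolding itv_def by (simp_all split: if_splits)
  have e1: "itv a z = {w\<in>C. le a w \<and> le w z}" using abz unfolding itv_def by simp
  have e2: "itv a b = {w\<in>C. le a w \<and> le w b}" using abz unfolding itv_def by simp
  have sub: "itv a z \<subseteq> itv a b"
  proof
    fix w assume "w \<in> itv a z"
    then have w: "w \<in> C" "le a w" "le w z" unfolding e1 by auto
    then have "le w b" using trans[of w z b] abz by simp
    then show "w \<in> itv a b" unfolding e2 using w by simp
  qed
  have "b \<notin> itv a z"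
  proof
    assume "b \<in> itv a z"
    then have "le b z" unfolding e1 by simp
    then have "z = b" using antisym[of z b] abz by simp
    then show False using assms(2) by simp
  qed
  moreover have "b \<in> itv a b" unfolding e2 using abz po_refl[of b] trans[of a z b] by simp
  ultimately have "itv a z \<subset> itv a b" using sub by blast
  then show ?thesis using itv_fin psubset_card_mono by blast
qed

definition P :: "('x \<Rightarrow> 'x \<Rightarrow> 'k::ring_1) \<Rightarrow> bool" where
  "P f \<longleftrightarrow> (\<forall>a b. f a b =
      (if a \<in> C \<and> b \<in> C \<and> le a b then
         (if a = b then 1 else - (\<Sum>z\<in>{z\<in>C. le a z \<and> le z b \<and> z \<noteq> b}. f a z))
       else 0))"

lemma set_eq: "a \<in> C \<Longrightarrow> b \<in> C \<Longrightarrow> {z\<in>C. le a z \<and> le z b \<and> z \<noteq> b} = itv a b - {b}"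
  unfolding itv_def by auto

fun g :: "nat \<Rightarrow> 'x \<Rightarrow> 'x \<Rightarrow> 'k::ring_1" where
  "g 0 a b = 0"
| "g (Suc n) a b = (if a \<in> C \<and> b \<in> C \<and> le a b then
         (if a = b then 1 else - (\<Sum>z\<in>itv a b - {b}. g n a z))
       else 0)"

lemma g_stable: "card (itv a b) < n \<Longrightarrow> card (itv a b) < m \<Longrightarrow> (g n a b :: 'k::ring_1) = g m a b"
proof (induction n arbitrary: m a b)
  case 0 then show ?case by simp
next
  case (Suc n)
  then obtain m' where m: "m = Suc m'" by (cases m) auto
  have eqz: "\<And>z. z \<in> itv a b - {b} \<Longrightarrow> (g n a z :: 'k) = g m' a z"
  proof -
    fix z assume z: "z \<in> itv a b - {b}"
    then have "card (itv a z) < card (itv a b)" using itv_less by blast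
    then show "(g n a z :: 'k) = g m' a z" using Suc.prems m Suc.IH[of a z m'] by simp
  qed
  have "sum (g n a) (itv a b - {b}) = (sum (g m' a) (itv a b - {b}) :: 'k)"
    by (rule sum.cong[OF refl]) (rule eqz)
  then show ?case unfolding m by (simp only: g.simps)
qed

lemma P_ex: "P (\<lambda>a b. (g (Suc (card (itv a b))) a b :: 'k::ring_1))"
  unfolding P_def
proof (intro allI)
  fix a b
  have eqs: "\<And>z. z \<in> itv a b - {b} \<Longrightarrow> (g (card (itv a b)) a z :: 'k) = g (Suc (card (itv a z))) a z"
  proof -
    fix z assume "z \<in> itv a b - {b}"
    then have "card (itv a z) < card (itv a b)" using itv_less by blast
    then show "(g (card (itv a b)) a z :: 'k) = g (Suc (card (itv a z))) a z"
      using g_stable[of a z "card (itv a b)" "Suc (card (itv a z))"] by simp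
  qed
  show "(g (Suc (card (itv a b))) a b :: 'k) =
         (if a \<in> C \<and> b \<in> C \<and> le a b
          then if a = b then 1 else - (\<Sum>z\<in>{z\<in>C. le a z \<and> le z b \<and> z \<noteq> b}. g (Suc (card (itv a z))) a z) else 0)"
  proof (cases "a \<in> C \<and> b \<in> C \<and> le a b \<and> a \<noteq> b")
    case True
    then have "(g (Suc (card (itv a b))) a b :: 'k) = - (\<Sum>z\<in>itv a b - {b}. g (card (itv a b)) a z)"
      by simp
    also have "\<dots> = - (\<Sum>z\<in>itv a b - {b}. g (Suc (card (itv a z))) a z)"
      using eqs by (metis (no_types, lifting) sum.cong)
    finally show ?thesis using True set_eq[of a b] by simp
  next
    case False
    then show ?thesis by auto
  qed
qed

lemma P_uniq: "P f \<Longrightarrow> P h \<Longrightarrow> f a b = h a b"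
proof (induction "card (itv a b)" arbitrary: b rule: less_induct)
  case less
  have eqz: "\<And>z. z \<in> itv a b - {b} \<Longrightarrow> f a z = h a z"
    using less itv_less by blast
  have F: "f a b = (if a \<in> C \<and> b \<in> C \<and> le a b then
         (if a = b then 1 else - (\<Sum>z\<in>{z\<in>C. le a z \<and> le z b \<and> z \<noteq> b}. f a z)) else 0)"
    using less.prems(1) unfolding P_def by blast
  have H: "h a b = (if a \<in> C \<and> b \<in> C \<and> le a b then
         (if a = b then 1 else - (\<Sum>z\<in>{z\<in>C. le a z \<and> le z b \<and> z \<noteq> b}. h a z)) else 0)"
    using less.prems(2) unfolding P_def by blast
  show ?case
  proof (cases "a \<in> C \<and> b \<in> C \<and> le a b \<and> a \<noteq> b")
    case True
    then have "f a b = - (\<Sum>z\<in>itv a b - {b}. f a z)" "h a b = - (\<Sum>z\<in>itv a b - {b}. h a z)"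
      using F H set_eq[of a b] by auto
    moreover have "(\<Sum>z\<in>itv a b - {b}. f a z) = (\<Sum>z\<in>itv a b - {b}. h a z)"
      by (rule sum.cong[OF refl]) (rule eqz)
    ultimately show ?thesis by simp
  next
    case False
    then show ?thesis using F H by auto
  qed
qed

lemma mobius_P: "P (mobius le C :: 'x \<Rightarrow> 'x \<Rightarrow> 'k::ring_1)"
proof -
  have "\<exists>!f::'x \<Rightarrow> 'x \<Rightarrow> 'k. P f"
  proof (rule ex1I[where a="\<lambda>a b. g (Suc (card (itv a b))) a b"])
    show "P (\<lambda>a b. (g (Suc (card (itv a b))) a b :: 'k))" by (rule P_ex)
  next
    fix f :: "'x \<Rightarrow> 'x \<Rightarrow> 'k" assume "P f"
    then show "f = (\<lambda>a b. g (Suc (card (itv a b))) a b)"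
      using P_uniq[OF _ P_ex] by (intro ext) blast
  qed
  then have "P (THE f::'x \<Rightarrow> 'x \<Rightarrow> 'k. P f)" by (rule theI')
  moreover have "(mobius le C :: 'x \<Rightarrow> 'x \<Rightarrow> 'k) = (THE f. P f)" unfolding mobius_def P_def by simp
  ultimately show ?thesis by simp
qed

lemma mobius_refl: "a \<in> C \<Longrightarrow> mobius le C a a = 1"
proof -
  assume a: "a \<in> C"
  have M: "mobius le C a a = (if a \<in> C \<and> a \<in> C \<and> le a a then
         (if a = a then 1 else - (\<Sum>z\<in>{z\<in>C. le a z \<and> le z a \<and> z \<noteq> a}. mobius le C a z)) else (0::'k::ring_1))"
    using mobius_P unfolding P_def by blast
  then show ?thesis using a po_refl by simp
qed

lemma mobius_sum:
  assumes "a \<in> C" "b \<in> C"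
  shows "(\<Sum>z\<in>itv a b. mobius le C a z) = (if a = b then 1 else (0::'k::ring_1))"
proof (cases "le a b")
  case False
  have e2: "itv a b = {w\<in>C. le a w \<and> le w b}" using assms unfolding itv_def by simp
  have "itv a b = {}" unfolding e2 using False assms trans by blast
  then show ?thesis using False po_refl assms by auto
next
  case True
  have e2: "itv a b = {w\<in>C. le a w \<and> le w b}" using assms unfolding itv_def by simp
  have bin: "b \<in> itv a b" unfolding e2 using True assms po_refl by blast
  have split: "(\<Sum>z\<in>itv a b. mobius le C a z :: 'k) = mobius le C a b + (\<Sum>z\<in>itv a b - {b}. mobius le C a z)"
    using bin itv_fin by (metis sum.remove)
  show ?thesis
  proof (cases "a = b")
    case True
    then have "itv a b - {b} = {}" unfolding e2 using assms antisym by blast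
    then have "itv a b = {b}" using bin by blast
    then show ?thesis using True mobius_refl assms by simp
  next
    case False
    have M: "mobius le C a b = (if a \<in> C \<and> b \<in> C \<and> le a b then
         (if a = b then 1 else - (\<Sum>z\<in>{z\<in>C. le a z \<and> le z b \<and> z \<noteq> b}. mobius le C a z)) else (0::'k))"
      using mobius_P unfolding P_def by blast
    have "(mobius le C a b :: 'k) = - (\<Sum>z\<in>itv a b - {b}. mobius le C a z)"
      using M assms True False set_eq[of a b] by simp
    then show ?thesis using split False by simp
  qed
qed

end



lemma sum_fun_apply: "(sum f A) x = (\<Sum>a\<in>A. f a x)"
  by (induction A rule: infinite_finite_induct) auto

lemma fscale_apply[simp]: "fscale c p y = c * p y"
  by (simp add: fscale_def)

interpretation fm: module "fscale :: 'k::comm_ring_1 \<Rightarrow> ('x \<Rightarrow> 'k) \<Rightarrow> ('x \<Rightarrow> 'k)"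
  by standard (auto simp: fscale_def algebra_simps)

lemma finite_minimal:
  assumes "finite A" "A \<noteq> {}"
    and "\<forall>x\<in>A. \<forall>y\<in>A. R x y \<longrightarrow> R y x \<longrightarrow> x = y"
    and "\<forall>x\<in>A. \<forall>y\<in>A. \<forall>z\<in>A. R x y \<longrightarrow> R y z \<longrightarrow> R x z"
  shows "\<exists>m\<in>A. \<forall>c\<in>A. R c m \<longrightarrow> c = m"
  using assms
proof (induction A rule: finite_ne_induct)
  case (singleton x) show ?case by blast
next
  case (insert x F)
  have as: "\<forall>a\<in>F. \<forall>b\<in>F. R a b \<longrightarrow> R b a \<longrightarrow> a = b" using insert.prems(1) by (meson insertCI)
  have tr: "\<forall>a\<in>F. \<forall>b\<in>F. \<forall>c\<in>F. R a b \<longrightarrow> R b c \<longrightarrow> R a c" using insert.prems(2) by (meson insertCI)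
  obtain m where m: "m \<in> F" "\<forall>c\<in>F. R c m \<longrightarrow> c = m" using insert.IH[OF as tr] by blast
  have mx: "m \<in> insert x F" "x \<in> insert x F" using m(1) by auto
  show ?case
  proof (cases "R x m")
    case True
    have "\<forall>c\<in>insert x F. R c x \<longrightarrow> c = x"
    proof (intro ballI impI)
      fix c assume c: "c \<in> insert x F" "R c x"
      show "c = x"
      proof (cases "c = x")
        case False
        then have cF: "c \<in> F" using c by auto
        have "R c x \<longrightarrow> R x m \<longrightarrow> R c m"
          using insert.prems(2) c(1) mx by (meson insertCI)
        then have "R c m" using c True by simp
        then have "c = m" using m cF by blast
        moreover have "R m x \<longrightarrow> R x m \<longrightarrow> m = x" using insert.prems(1) mx by (meson insertCI)
        ultimately show ?thesis using c True by simp
      qed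
    qed
    then show ?thesis by blast
  next
    case False
    have "\<forall>c\<in>insert x F. R c m \<longrightarrow> c = m" using m False by blast
    then show ?thesis using mx by blast
  qed
qed

locale setting =
  fixes Fc :: "'l set \<Rightarrow> 'x set"
    and Fle :: "'l set \<Rightarrow> 'x \<Rightarrow> 'x \<Rightarrow> bool"
    and Fact :: "('l \<Rightarrow> 'l) \<Rightarrow> 'l set \<Rightarrow> 'x \<Rightarrow> 'x"
    and e :: 'x
    and mul :: "'l set \<Rightarrow> 'l set \<Rightarrow> 'x \<Rightarrow> 'x \<Rightarrow> 'x"
    and comul :: "'l set \<Rightarrow> 'l set \<Rightarrow> 'x \<Rightarrow> 'x \<times> 'x"
    and I :: "'l set"
  assumes co: "poset_comonoid Fc Fle Fact e comul"
    and mo: "poset_monoid Fc Fle Fact e mul"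
    and adj: "adjoint_pair Fc Fle comul mul"
    and finI: "finite I"
    and upfin: "\<forall>x\<in>Fc I. finite {y\<in>Fc I. Fle I x y}"
begin

lemma sp: "poset_species Fc Fle Fact e" using mo unfolding poset_monoid_def by (rule conjunct1)

lemma po:
  assumes "finite J"
  shows "\<And>x. x \<in> Fc J \<Longrightarrow> Fle J x x"
    and "\<And>x y. x \<in> Fc J \<Longrightarrow> y \<in> Fc J \<Longrightarrow> Fle J x y \<Longrightarrow> Fle J y x \<Longrightarrow> x = y"
    and "\<And>x y z. x \<in> Fc J \<Longrightarrow> y \<in> Fc J \<Longrightarrow> z \<in> Fc J \<Longrightarrow> Fle J x y \<Longrightarrow> Fle J y z \<Longrightarrow> Fle J x z"
    and "\<And>x y. x \<in> Fc J \<Longrightarrow> y \<in> Fc J \<Longrightarrow> finite {z\<in>Fc J. Fle J x z \<and> Fle J z y}"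
proof -
  have A: "\<forall>I. finite I \<longrightarrow>
        (\<forall>x\<in>Fc I. Fle I x x) \<and>
        (\<forall>x\<in>Fc I. \<forall>y\<in>Fc I. Fle I x y \<longrightarrow> Fle I y x \<longrightarrow> x = y) \<and>
        (\<forall>x\<in>Fc I. \<forall>y\<in>Fc I. \<forall>z\<in>Fc I. Fle I x y \<longrightarrow> Fle I y z \<longrightarrow> Fle I x z) \<and>
        (\<forall>x\<in>Fc I. \<forall>y\<in>Fc I. finite {z\<in>Fc I. Fle I x z \<and> Fle I z y})"
    using sp unfolding poset_species_def by (rule conjunct1)
  note H = A[rule_format, OF assms]
  note H1 = conjunct1[OF H] and H2 = conjunct1[OF conjunct2[OF H]]
    and H3 = conjunct1[OF conjunct2[OF conjunct2[OF H]]] and H4 = conjunct2[OF conjunct2[OF conjunct2[OF H]]]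
  show "\<And>x. x \<in> Fc J \<Longrightarrow> Fle J x x" using H1 by (rule bspec)
  show "\<And>x y. x \<in> Fc J \<Longrightarrow> y \<in> Fc J \<Longrightarrow> Fle J x y \<Longrightarrow> Fle J y x \<Longrightarrow> x = y"
    using H2 by (meson)
  show "\<And>x y z. x \<in> Fc J \<Longrightarrow> y \<in> Fc J \<Longrightarrow> z \<in> Fc J \<Longrightarrow> Fle J x y \<Longrightarrow> Fle J y z \<Longrightarrow> Fle J x z"
    using H3 by (meson)
  show "\<And>x y. x \<in> Fc J \<Longrightarrow> y \<in> Fc J \<Longrightarrow> finite {z\<in>Fc J. Fle J x z \<and> Fle J z y}"
    using H4 by (meson)
qed

sublocale L: lfpo "Fle I" "Fc I"
proof
  show "\<And>x. x \<in> Fc I \<Longrightarrow> Fle I x x" by (rule po(1)[OF finI])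
  show "\<And>x y. x \<in> Fc I \<Longrightarrow> y \<in> Fc I \<Longrightarrow> Fle I x y \<Longrightarrow> Fle I y x \<Longrightarrow> x = y" by (rule po(2)[OF finI])
  show "\<And>x y z. x \<in> Fc I \<Longrightarrow> y \<in> Fc I \<Longrightarrow> z \<in> Fc I \<Longrightarrow> Fle I x y \<Longrightarrow> Fle I y z \<Longrightarrow> Fle I x z" by (rule po(3)[OF finI])
  show "\<And>x y. x \<in> Fc I \<Longrightarrow> y \<in> Fc I \<Longrightarrow> finite {z\<in>Fc I. Fle I x z \<and> Fle I z y}" by (rule po(4)[OF finI])
qed

lemma mul_in: "finite S \<Longrightarrow> finite T \<Longrightarrow> S \<inter> T = {} \<Longrightarrow> y \<in> Fc S \<Longrightarrow> z \<in> Fc T \<Longrightarrow> mul S T y z \<in> Fc (S \<union> T)"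
proof -
  assume a: "finite S" "finite T" "S \<inter> T = {}" "y \<in> Fc S" "z \<in> Fc T"
  have "\<forall>S T. finite S \<longrightarrow> finite T \<longrightarrow> S \<inter> T = {} \<longrightarrow> (\<forall>y\<in>Fc S. \<forall>z\<in>Fc T. mul S T y z \<in> Fc (S \<union> T))"
    using mo unfolding poset_monoid_def by meson
  then show ?thesis using a by blast
qed

lemma comul_in: "finite S \<Longrightarrow> finite T \<Longrightarrow> S \<inter> T = {} \<Longrightarrow> x \<in> Fc (S \<union> T) \<Longrightarrow>
   fst (comul S T x) \<in> Fc S \<and> snd (comul S T x) \<in> Fc T"
proof -
  assume a: "finite S" "finite T" "S \<inter> T = {}" "x \<in> Fc (S \<union> T)"
  have "\<forall>S T. finite S \<longrightarrow> finite T \<longrightarrow> S \<inter> T = {} \<longrightarrow> (\<forall>x\<in>Fc (S \<union> T). fst (comul S T x) \<in> Fc S \<and> snd (comul S T x) \<in> Fc T)"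
    using co unfolding poset_comonoid_def by meson
  then show ?thesis using a by blast
qed

lemma adjD: "finite S \<Longrightarrow> finite T \<Longrightarrow> S \<inter> T = {} \<Longrightarrow> x \<in> Fc (S \<union> T) \<Longrightarrow> y \<in> Fc S \<Longrightarrow> z \<in> Fc T \<Longrightarrow>
   (Fle S (fst (comul S T x)) y \<and> Fle T (snd (comul S T x)) z) \<longleftrightarrow> Fle (S \<union> T) x (mul S T y z)"
  by (rule adj[unfolded adjoint_pair_def, rule_format])

definition supp :: "('x \<Rightarrow> 'k::zero) \<Rightarrow> 'x set" where "supp p = {x. p x \<noteq> 0}"

definition psi :: "'x \<Rightarrow> ('x \<Rightarrow> 'k::comm_monoid_add) \<Rightarrow> 'k" where
  "psi v p = (\<Sum>y\<in>{y. p y \<noteq> 0 \<and> Fle I y v}. p y)"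

definition Phi :: "'l set \<Rightarrow> 'l set \<Rightarrow> 'x \<Rightarrow> 'x \<Rightarrow> ('x \<times> 'x \<Rightarrow> 'k::comm_monoid_add) \<Rightarrow> 'k" where
  "Phi S T a b q = (\<Sum>c\<in>{c. q c \<noteq> 0 \<and> Fle S (fst c) a \<and> Fle T (snd c) b}. q c)"

lemma kF_fin: "p \<in> kF Fc I \<Longrightarrow> finite {x. p x \<noteq> 0}" unfolding kF_def by auto
lemma kF_sub: "p \<in> kF Fc I \<Longrightarrow> p x \<noteq> 0 \<Longrightarrow> x \<in> Fc I" unfolding kF_def by auto

lemma psi_alt:
  assumes "finite A" "{y. p y \<noteq> 0} \<subseteq> A"
  shows "psi v p = (\<Sum>y\<in>{y\<in>A. Fle I y v}. p y)"
  unfolding psi_def using assms by (intro sum.mono_neutral_left) auto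

lemma comul_alt:
  assumes "finite A" "{y. p y \<noteq> 0} \<subseteq> A"
  shows "comul_lin comul S T p c = (\<Sum>x\<in>{x\<in>A. comul S T x = c}. p x)"
  unfolding comul_lin_def using assms by (intro sum.mono_neutral_left) auto

lemma lin_kF:
  fixes f :: "'i \<Rightarrow> 'x \<Rightarrow> 'k::comm_ring_1"
  assumes "finite t" "\<forall>i\<in>t. f i \<in> kF Fc I"
  shows "(\<Sum>i\<in>t. fscale (c i) (f i)) \<in> kF Fc I"
proof -
  let ?A = "\<Union>i\<in>t. {y. f i y \<noteq> 0}"
  have fA: "finite ?A" using assms by (intro finite_UN_I) (auto simp: kF_fin)
  have "{y. (\<Sum>i\<in>t. fscale (c i) (f i)) y \<noteq> 0} \<subseteq> ?A"
  proof
    fix y assume "y \<in> {y. (\<Sum>i\<in>t. fscale (c i) (f i)) y \<noteq> 0}"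
    then have "(\<Sum>i\<in>t. c i * f i y) \<noteq> 0" by (simp add: sum_fun_apply)
    then obtain i where "i \<in> t" "c i * f i y \<noteq> 0" by (meson sum.neutral)
    moreover then have "f i y \<noteq> 0" by auto
    ultimately show "y \<in> ?A" by blast
  qed
  moreover have "?A \<subseteq> Fc I" using assms kF_sub by blast
  ultimately show ?thesis unfolding kF_def using fA finite_subset by auto
qed

lemma lin_support:
  fixes f :: "'i \<Rightarrow> 'x \<Rightarrow> 'k::comm_ring_1"
  shows "{y. (\<Sum>i\<in>t. fscale (c i) (f i)) y \<noteq> 0} \<subseteq> (\<Union>i\<in>t. {y. f i y \<noteq> 0})"
proof
  fix y assume "y \<in> {y. (\<Sum>i\<in>t. fscale (c i) (f i)) y \<noteq> 0}"
  then have "(\<Sum>i\<in>t. c i * f i y) \<noteq> 0" by (simp add: sum_fun_apply)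
  then obtain i where "i \<in> t" "c i * f i y \<noteq> 0" by (meson sum.neutral)
  moreover then have "f i y \<noteq> 0" by auto
  ultimately show "y \<in> (\<Union>i\<in>t. {y. f i y \<noteq> 0})" by blast
qed

lemma psi_lin:
  fixes f :: "'i \<Rightarrow> 'x \<Rightarrow> 'k::comm_ring_1"
  assumes "finite t" "\<forall>i\<in>t. f i \<in> kF Fc I"
  shows "psi v (\<Sum>i\<in>t. fscale (c i) (f i)) = (\<Sum>i\<in>t. c i * psi v (f i))"
proof -
  let ?A = "\<Union>i\<in>t. {y. f i y \<noteq> 0}"
  have fA: "finite ?A" using assms by (intro finite_UN_I) (auto simp: kF_fin)
  have "psi v (\<Sum>i\<in>t. fscale (c i) (f i)) = (\<Sum>y\<in>{y\<in>?A. Fle I y v}. (\<Sum>i\<in>t. fscale (c i) (f i)) y)"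
    by (rule psi_alt[OF fA lin_support])
  also have "\<dots> = (\<Sum>y\<in>{y\<in>?A. Fle I y v}. (\<Sum>i\<in>t. c i * f i y))"
    by (simp add: sum_fun_apply)
  also have "\<dots> = (\<Sum>i\<in>t. c i * (\<Sum>y\<in>{y\<in>?A. Fle I y v}. f i y))"
    by (subst sum.swap) (simp add: sum_distrib_left)
  also have "\<dots> = (\<Sum>i\<in>t. c i * psi v (f i))"
  proof (intro sum.cong refl)
    fix i assume "i \<in> t"
    then have "{y. f i y \<noteq> 0} \<subseteq> ?A" by blast
    then have "psi v (f i) = (\<Sum>y\<in>{y\<in>?A. Fle I y v}. f i y)" by (rule psi_alt[OF fA])
    then show "c i * (\<Sum>y\<in>{y\<in>?A. Fle I y v}. f i y) = c i * psi v (f i)" by simp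
  qed
  finally show ?thesis .
qed

lemma comul_lin_lin:
  fixes f :: "'i \<Rightarrow> 'x \<Rightarrow> 'k::comm_ring_1"
  assumes "finite t" "\<forall>i\<in>t. f i \<in> kF Fc I"
  shows "comul_lin comul S T (\<Sum>i\<in>t. fscale (c i) (f i)) yz = (\<Sum>i\<in>t. c i * comul_lin comul S T (f i) yz)"
proof -
  let ?A = "\<Union>i\<in>t. {y. f i y \<noteq> 0}"
  have fA: "finite ?A" using assms by (intro finite_UN_I) (auto simp: kF_fin)
  have "comul_lin comul S T (\<Sum>i\<in>t. fscale (c i) (f i)) yz = (\<Sum>y\<in>{y\<in>?A. comul S T y = yz}. (\<Sum>i\<in>t. fscale (c i) (f i)) y)"
    by (rule comul_alt[OF fA lin_support])
  also have "\<dots> = (\<Sum>y\<in>{y\<in>?A. comul S T y = yz}. (\<Sum>i\<in>t. c i * f i y))"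
    by (simp add: sum_fun_apply)
  also have "\<dots> = (\<Sum>i\<in>t. c i * (\<Sum>y\<in>{y\<in>?A. comul S T y = yz}. f i y))"
    by (subst sum.swap) (simp add: sum_distrib_left)
  also have "\<dots> = (\<Sum>i\<in>t. c i * comul_lin comul S T (f i) yz)"
  proof (intro sum.cong refl)
    fix i assume "i \<in> t"
    then have "{y. f i y \<noteq> 0} \<subseteq> ?A" by blast
    then have "comul_lin comul S T (f i) yz = (\<Sum>y\<in>{y\<in>?A. comul S T y = yz}. f i y)" by (rule comul_alt[OF fA])
    then show "c i * (\<Sum>y\<in>{y\<in>?A. comul S T y = yz}. f i y) = c i * comul_lin comul S T (f i) yz" by simp
  qed
  finally show ?thesis .
qed

lemma omega_kF: "x \<in> Fc I \<Longrightarrow> (omega Fc Fle I x :: 'x \<Rightarrow> 'k::ring_1) \<in> kF Fc I"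
proof -
  assume x: "x \<in> Fc I"
  have sub: "{y. omega Fc Fle I x y \<noteq> (0::'k)} \<subseteq> {y\<in>Fc I. Fle I x y}"
    unfolding omega_def by (auto split: if_splits)
  have fin: "finite {y\<in>Fc I. Fle I x y}" using upfin x by blast
  have "finite {y. omega Fc Fle I x y \<noteq> (0::'k)}" by (rule finite_subset[OF sub fin])
  moreover have "{y. omega Fc Fle I x y \<noteq> (0::'k)} \<subseteq> Fc I" using sub by blast
  ultimately show ?thesis unfolding kF_def by blast
qed

lemma psi_omega:
  assumes x: "x \<in> Fc I" and v: "v \<in> Fc I"
  shows "psi v (omega Fc Fle I x) = (if x = v then 1 else (0::'k::ring_1))"
proof -
  have e: "L.itv x v = {z\<in>Fc I. Fle I x z \<and> Fle I z v}" using x v by (simp add: L.itv_def)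
  have sub: "{y. omega Fc Fle I x y \<noteq> (0::'k) \<and> Fle I y v} \<subseteq> L.itv x v"
    unfolding e omega_def by (auto split: if_splits)
  have "psi v (omega Fc Fle I x :: 'x \<Rightarrow> 'k) = (\<Sum>y\<in>L.itv x v. omega Fc Fle I x y)"
    unfolding psi_def
  proof (rule sum.mono_neutral_left[OF L.itv_fin sub])
    show "\<forall>i\<in>L.itv x v - {y. omega Fc Fle I x y \<noteq> (0::'k) \<and> Fle I y v}. omega Fc Fle I x i = (0::'k)"
      unfolding e by auto
  qed
  also have "\<dots> = (\<Sum>y\<in>L.itv x v. mobius (Fle I) (Fc I) x y)"
    by (rule sum.cong[OF refl]) (simp add: omega_def e)
  also have "\<dots> = (if x = v then 1 else 0)" by (rule L.mobius_sum[OF x v])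
  finally show ?thesis .
qed

end



context setting begin

lemma finS: "S \<union> T = I \<Longrightarrow> finite S" "S \<union> T = I \<Longrightarrow> finite T"
  using finI by (metis finite_Un)+

lemma Phi_comul:
  assumes ST: "S \<union> T = I" "S \<inter> T = {}" and a: "a \<in> Fc S" and b: "b \<in> Fc T"
    and p: "p \<in> kF Fc I"
  shows "Phi S T a b (comul_lin comul S T p) = psi (mul S T a b) (p :: 'x \<Rightarrow> 'k::comm_ring_1)"
proof -
  have fS: "finite S" and fT: "finite T" using finS ST by auto
  define P where "P = {x. p x \<noteq> 0}"
  have fP: "finite P" using kF_fin[OF p] unfolding P_def .
  have PI: "P \<subseteq> Fc I" using kF_sub[OF p] unfolding P_def by blast
  define q where "q = comul_lin comul S T p"
  define cond where "cond = (\<lambda>c::'x\<times>'x. Fle S (fst c) a \<and> Fle T (snd c) b)"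
  define P' where "P' = {x\<in>P. cond (comul S T x)}"
  have qsupp: "{c. q c \<noteq> 0} \<subseteq> comul S T ` P"
  proof
    fix c assume "c \<in> {c. q c \<noteq> 0}"
    then have "(\<Sum>x\<in>{x. p x \<noteq> 0 \<and> comul S T x = c}. p x) \<noteq> 0"
      unfolding q_def comul_lin_def by simp
    then obtain x where "p x \<noteq> 0" "comul S T x = c" by (metis (mono_tags, lifting) empty_Collect_eq sum.empty)
    then show "c \<in> comul S T ` P" unfolding P_def by blast
  qed
  have "Phi S T a b q = (\<Sum>c\<in>{c\<in>comul S T ` P. cond c}. q c)"
    unfolding Phi_def cond_def
    by (rule sum.mono_neutral_left) (use fP qsupp in auto)
  also have "\<dots> = (\<Sum>c\<in>{c\<in>comul S T ` P. cond c}. (\<Sum>x\<in>{x\<in>P'. comul S T x = c}. p x))"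
  proof (rule sum.cong[OF refl])
    fix c assume c: "c \<in> {c\<in>comul S T ` P. cond c}"
    have "{x. p x \<noteq> 0 \<and> comul S T x = c} = {x\<in>P'. comul S T x = c}"
      using c unfolding P'_def P_def by auto
    then show "q c = (\<Sum>x\<in>{x\<in>P'. comul S T x = c}. p x)"
      unfolding q_def comul_lin_def by simp
  qed
  also have "\<dots> = sum p P'"
  proof (rule sum.group)
    show "finite P'" unfolding P'_def using fP by simp
    show "finite {c\<in>comul S T ` P. cond c}" using fP by simp
    show "comul S T ` P' \<subseteq> {c\<in>comul S T ` P. cond c}" unfolding P'_def by blast
  qed
  also have "\<dots> = sum p {x\<in>P. Fle I x (mul S T a b)}"
  proof -
    have "P' = {x\<in>P. Fle I x (mul S T a b)}"
      unfolding P'_def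
    proof (rule Collect_cong)
      fix x
      show "(x \<in> P \<and> cond (comul S T x)) = (x \<in> P \<and> Fle I x (mul S T a b))"
      proof (cases "x \<in> P")
        case True
        then have "x \<in> Fc (S \<union> T)" using PI ST by blast
        then have "cond (comul S T x) = Fle (S \<union> T) x (mul S T a b)"
          unfolding cond_def using adjD[OF fS fT ST(2) _ a b] by blast
        then show ?thesis using True ST by simp
      qed simp
    qed
    then show ?thesis by simp
  qed
  also have "\<dots> = psi (mul S T a b) p" unfolding psi_def P_def by simp
  finally show ?thesis unfolding q_def .
qed

lemma Phi_inj:
  assumes ST: "S \<union> T = I" "S \<inter> T = {}"
    and fq: "finite {c. q c \<noteq> 0}" and sq: "{c. q c \<noteq> 0} \<subseteq> Fc S \<times> Fc T"
    and z: "\<forall>a\<in>Fc S. \<forall>b\<in>Fc T. Phi S T a b q = (0::'k::comm_ring_1)"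
  shows "q = (\<lambda>_. 0)"
proof (rule ccontr)
  assume "q \<noteq> (\<lambda>_. 0)"
  then have ne: "{c. q c \<noteq> 0} \<noteq> {}" by auto
  have fS: "finite S" and fT: "finite T" using finS ST by auto
  define R where "R = (\<lambda>c d. Fle S (fst c) (fst d) \<and> Fle T (snd c) (snd d))"
  let ?A = "{c. q c \<noteq> 0}"
  have as: "\<forall>x\<in>?A. \<forall>y\<in>?A. R x y \<longrightarrow> R y x \<longrightarrow> x = y"
  proof (intro ballI impI)
    fix x y assume xy: "x \<in> ?A" "y \<in> ?A" "R x y" "R y x"
    then have m: "fst x \<in> Fc S" "snd x \<in> Fc T" "fst y \<in> Fc S" "snd y \<in> Fc T" using sq by auto
    have "fst x = fst y" using po(2)[OF fS m(1) m(3)] xy(3,4) unfolding R_def by blast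
    moreover have "snd x = snd y" using po(2)[OF fT m(2) m(4)] xy(3,4) unfolding R_def by blast
    ultimately show "x = y" by (simp add: prod_eq_iff)
  qed
  have tr: "\<forall>x\<in>?A. \<forall>y\<in>?A. \<forall>w\<in>?A. R x y \<longrightarrow> R y w \<longrightarrow> R x w"
  proof (intro ballI impI)
    fix x y w assume xy: "x \<in> ?A" "y \<in> ?A" "w \<in> ?A" "R x y" "R y w"
    then have m: "fst x \<in> Fc S" "snd x \<in> Fc T" "fst y \<in> Fc S" "snd y \<in> Fc T"
       "fst w \<in> Fc S" "snd w \<in> Fc T" using sq by auto
    have "Fle S (fst x) (fst w)" using po(3)[OF fS m(1) m(3) m(5)] xy(4,5) unfolding R_def by blast
    moreover have "Fle T (snd x) (snd w)" using po(3)[OF fT m(2) m(4) m(6)] xy(4,5) unfolding R_def by blast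
    ultimately show "R x w" unfolding R_def by blast
  qed
  obtain m where m: "m \<in> ?A" "\<forall>c\<in>?A. R c m \<longrightarrow> c = m"
    using finite_minimal[OF fq ne as tr] by blast
  have mm: "fst m \<in> Fc S" "snd m \<in> Fc T" using m(1) sq by auto
  have "{c. q c \<noteq> 0 \<and> Fle S (fst c) (fst m) \<and> Fle T (snd c) (snd m)} = {m}"
  proof
    show "{c. q c \<noteq> 0 \<and> Fle S (fst c) (fst m) \<and> Fle T (snd c) (snd m)} \<subseteq> {m}"
      using m(2) unfolding R_def by blast
    show "{m} \<subseteq> {c. q c \<noteq> 0 \<and> Fle S (fst c) (fst m) \<and> Fle T (snd c) (snd m)}"
      using m(1) po(1)[OF fS mm(1)] po(1)[OF fT mm(2)] by simp
  qed
  then have "Phi S T (fst m) (snd m) q = q m" unfolding Phi_def by simp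
  moreover have "Phi S T (fst m) (snd m) q = 0" using z mm by blast
  ultimately show False using m(1) by simp
qed

lemma comul_lin_supp:
  assumes ST: "S \<union> T = I" "S \<inter> T = {}" and p: "p \<in> kF Fc I"
  shows "finite {c. comul_lin comul S T p c \<noteq> (0::'k::comm_ring_1)}"
    and "{c. comul_lin comul S T p c \<noteq> 0} \<subseteq> Fc S \<times> Fc T"
proof -
  have fS: "finite S" and fT: "finite T" using finS ST by auto
  have sub: "{c. comul_lin comul S T p c \<noteq> 0} \<subseteq> comul S T ` {x. p x \<noteq> 0}"
  proof
    fix c assume "c \<in> {c. comul_lin comul S T p c \<noteq> 0}"
    then have "(\<Sum>x\<in>{x. p x \<noteq> 0 \<and> comul S T x = c}. p x) \<noteq> 0"
      unfolding comul_lin_def by simp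
    then obtain x where "p x \<noteq> 0" "comul S T x = c" by (metis (mono_tags, lifting) empty_Collect_eq sum.empty)
    then show "c \<in> comul S T ` {x. p x \<noteq> 0}" by blast
  qed
  then show "finite {c. comul_lin comul S T p c \<noteq> 0}"
    using kF_fin[OF p] finite_surj by blast
  have "comul S T ` {x. p x \<noteq> 0} \<subseteq> Fc S \<times> Fc T"
  proof
    fix c assume "c \<in> comul S T ` {x. p x \<noteq> 0}"
    then obtain x where x: "p x \<noteq> 0" "c = comul S T x" by blast
    then have "x \<in> Fc (S \<union> T)" using kF_sub[OF p] ST by blast
    then show "c \<in> Fc S \<times> Fc T" using comul_in[OF fS fT ST(2)] x by (simp add: mem_Times_iff)
  qed
  then show "{c. comul_lin comul S T p c \<noteq> 0} \<subseteq> Fc S \<times> Fc T" using sub by blast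
qed

lemma Phi_zero: "Phi S T a b (\<lambda>_. 0::'k::comm_ring_1) = 0" unfolding Phi_def by simp

lemma prim_iff:
  assumes x: "x \<in> Fc I"
  shows "primitive Fc comul I (omega Fc Fle I x :: 'x \<Rightarrow> 'k::field) \<longleftrightarrow> box_indecomposable Fc mul I x"
proof
  assume pr: "primitive Fc comul I (omega Fc Fle I x :: 'x \<Rightarrow> 'k)"
  show "box_indecomposable Fc mul I x"
    unfolding box_indecomposable_def
  proof
    assume "\<exists>S T y z. S \<noteq> {} \<and> T \<noteq> {} \<and> S \<inter> T = {} \<and> S \<union> T = I \<and> y \<in> Fc S \<and> z \<in> Fc T \<and> x = mul S T y z"
    then obtain S T y z where d: "S \<noteq> {}" "T \<noteq> {}" "S \<inter> T = {}" "S \<union> T = I" "y \<in> Fc S" "z \<in> Fc T" "x = mul S T y z"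
      by blast
    have "comul_lin comul S T (omega Fc Fle I x :: 'x \<Rightarrow> 'k) = (\<lambda>_. 0)"
      using pr d unfolding primitive_def by blast
    then have "Phi S T y z (comul_lin comul S T (omega Fc Fle I x :: 'x \<Rightarrow> 'k)) = 0"
      by (simp add: Phi_zero)
    moreover have "Phi S T y z (comul_lin comul S T (omega Fc Fle I x :: 'x \<Rightarrow> 'k)) = psi x (omega Fc Fle I x :: 'x \<Rightarrow> 'k)"
      using Phi_comul[OF d(4) d(3) d(5) d(6) omega_kF[OF x]] d(7) by simp
    moreover have "psi x (omega Fc Fle I x :: 'x \<Rightarrow> 'k) = 1" using psi_omega[OF x x] by simp
    ultimately show False by simp
  qed
next
  assume ind: "box_indecomposable Fc mul I x"
  show "primitive Fc comul I (omega Fc Fle I x :: 'x \<Rightarrow> 'k)"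
    unfolding primitive_def
  proof (intro conjI allI impI)
    show "(omega Fc Fle I x :: 'x \<Rightarrow> 'k) \<in> kF Fc I" by (rule omega_kF[OF x])
    fix S T assume d: "S \<noteq> {}" "T \<noteq> {}" "S \<inter> T = {}" "S \<union> T = I"
    have fS: "finite S" and fT: "finite T" using finS d by auto
    show "comul_lin comul S T (omega Fc Fle I x :: 'x \<Rightarrow> 'k) = (\<lambda>_. 0)"
    proof (rule Phi_inj[OF d(4) d(3) comul_lin_supp[OF d(4) d(3) omega_kF[OF x]]])
      show "\<forall>a\<in>Fc S. \<forall>b\<in>Fc T. Phi S T a b (comul_lin comul S T (omega Fc Fle I x :: 'x \<Rightarrow> 'k)) = 0"
      proof (intro ballI)
        fix a b assume a: "a \<in> Fc S" and b: "b \<in> Fc T"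
        have mi: "mul S T a b \<in> Fc I" using mul_in[OF fS fT d(3) a b] d(4) by simp
        have "x \<noteq> mul S T a b" using ind d a b unfolding box_indecomposable_def by blast
        then have "psi (mul S T a b) (omega Fc Fle I x :: 'x \<Rightarrow> 'k) = 0"
          using psi_omega[OF x mi] by simp
        moreover have "Phi S T a b (comul_lin comul S T (omega Fc Fle I x :: 'x \<Rightarrow> 'k)) = psi (mul S T a b) (omega Fc Fle I x :: 'x \<Rightarrow> 'k)"
          by (rule Phi_comul[OF d(4) d(3) a b]) (rule omega_kF[OF x])
        ultimately show "Phi S T a b (comul_lin comul S T (omega Fc Fle I x :: 'x \<Rightarrow> 'k)) = 0"
          by simp
      qed
    qed
  qed
qed

end



context setting begin

abbreviation om :: "'x \<Rightarrow> 'x \<Rightarrow> 'k::ring_1" where "om x \<equiv> omega Fc Fle I x"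

lemma psi_zero: "psi v (\<lambda>_. 0::'k::comm_ring_1) = 0" unfolding psi_def by simp

lemma psi_om_eq:
  assumes a: "a \<in> om ` Fc I" and w: "w \<in> Fc I"
  shows "psi w a = (if a = om w then 1 else (0::'k::comm_ring_1))"
proof -
  obtain x where x: "x \<in> Fc I" "a = om x" using a by blast
  show ?thesis
  proof (cases "a = om w")
    case True
    then show ?thesis using psi_omega[OF w w] by simp
  next
    case False
    then have "x \<noteq> w" using x by blast
    then show ?thesis using psi_omega[OF x(1) w] x False by simp
  qed
qed

lemma coef:
  fixes r :: "('x \<Rightarrow> 'k::comm_ring_1) \<Rightarrow> 'k"
  assumes t: "finite t" "t \<subseteq> om ` Fc I" and w: "w \<in> Fc I" and wt: "om w \<in> t"
  shows "psi w (\<Sum>a\<in>t. fscale (r a) a) = r (om w)"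
proof -
  have kf: "\<forall>i\<in>t. id i \<in> kF Fc I" using t omega_kF by auto
  have "psi w (\<Sum>a\<in>t. fscale (r a) (id a)) = (\<Sum>a\<in>t. r a * psi w (id a))"
    by (rule psi_lin[OF t(1) kf])
  also have "\<dots> = (\<Sum>a\<in>t. if a = om w then r a else 0)"
  proof (rule sum.cong[OF refl])
    fix a assume "a \<in> t"
    then have "psi w a = (if a = om w then 1 else (0::'k))" using psi_om_eq t(2) w by blast
    then show "r a * psi w (id a) = (if a = om w then r a else 0)" by simp
  qed
  also have "\<dots> = r (om w)" using t(1) wt by (simp add: sum.delta')
  finally show ?thesis by simp
qed

definition delta :: "'x \<Rightarrow> 'x \<Rightarrow> 'k::comm_ring_1" where "delta y = (\<lambda>z. if z = y then 1 else 0)"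

lemma delta_span_aux:
  "\<forall>y. y \<in> Fc I \<longrightarrow> card {z\<in>Fc I. Fle I y z} = n \<longrightarrow>
     (delta y :: 'x \<Rightarrow> 'k::comm_ring_1) \<in> fm.span (om ` Fc I)"
proof (induction n rule: less_induct)
  case (less n)
  show ?case
  proof (intro allI impI)
    fix y assume y: "y \<in> Fc I" and cn: "card {z\<in>Fc I. Fle I y z} = n"
    define U where "U = {z\<in>Fc I. Fle I y z}"
    have fU: "finite U" unfolding U_def using upfin y by blast
    have yU: "y \<in> U" unfolding U_def using y L.po_refl by blast
    have IH: "(delta w :: 'x \<Rightarrow> 'k) \<in> fm.span (om ` Fc I)" if w: "w \<in> U - {y}" for w
    proof -
      have wI: "w \<in> Fc I" and yw: "Fle I y w" and wy: "w \<noteq> y" using w unfolding U_def by auto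
      have sub: "{z\<in>Fc I. Fle I w z} \<subseteq> U"
      proof
        fix z assume "z \<in> {z\<in>Fc I. Fle I w z}"
        then have z: "z \<in> Fc I" "Fle I w z" by auto
        then have "Fle I y z" using L.trans[OF y wI z(1) yw z(2)] by simp
        then show "z \<in> U" unfolding U_def using z by simp
      qed
      have "y \<notin> {z\<in>Fc I. Fle I w z}"
      proof
        assume "y \<in> {z\<in>Fc I. Fle I w z}"
        then have "Fle I w y" by simp
        then have "w = y" using L.antisym[OF wI y _ yw] by simp
        then show False using wy by simp
      qed
      then have "{z\<in>Fc I. Fle I w z} \<subset> U" using sub yU by blast
      then have "card {z\<in>Fc I. Fle I w z} < n" using psubset_card_mono[OF fU] cn unfolding U_def by simp
      then show ?thesis using less.IH wI by blast
    qed
    have eq: "(delta y :: 'x \<Rightarrow> 'k) = om y - (\<Sum>w\<in>U - {y}. fscale (mobius (Fle I) (Fc I) y w) (delta w))"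
    proof (rule ext)
      fix z
      have s: "(\<Sum>w\<in>U - {y}. fscale (mobius (Fle I) (Fc I) y w) (delta w :: 'x \<Rightarrow> 'k)) z
          = (\<Sum>w\<in>U - {y}. if z = w then mobius (Fle I) (Fc I) y w else 0)"
        unfolding sum_fun_apply by (rule sum.cong[OF refl]) (simp add: delta_def)
      also have "\<dots> = (if z \<in> U - {y} then mobius (Fle I) (Fc I) y z else 0)"
        using fU by (simp add: sum.delta)
      finally have s: "(\<Sum>w\<in>U - {y}. fscale (mobius (Fle I) (Fc I) y w) (delta w :: 'x \<Rightarrow> 'k)) z
          = (if z \<in> U - {y} then mobius (Fle I) (Fc I) y z else 0)" .
      have o: "(om y :: 'x \<Rightarrow> 'k) z = (if z \<in> U then mobius (Fle I) (Fc I) y z else 0)"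
        unfolding omega_def U_def by simp
      show "(delta y :: 'x \<Rightarrow> 'k) z = (om y - (\<Sum>w\<in>U - {y}. fscale (mobius (Fle I) (Fc I) y w) (delta w))) z"
      proof -
        have mr: "(mobius (Fle I) (Fc I) y y :: 'k) = 1" by (rule L.mobius_refl[OF y])
        show ?thesis unfolding fun_diff_def s o using mr yU by (simp add: delta_def)
      qed
    qed
    have "(om y - (\<Sum>w\<in>U - {y}. fscale (mobius (Fle I) (Fc I) y w) (delta w)) :: 'x \<Rightarrow> 'k) \<in> fm.span (om ` Fc I)"
    proof (rule fm.span_diff)
      show "(om y :: 'x \<Rightarrow> 'k) \<in> fm.span (om ` Fc I)" using y by (intro fm.span_base) simp
      show "(\<Sum>w\<in>U - {y}. fscale (mobius (Fle I) (Fc I) y w) (delta w :: 'x \<Rightarrow> 'k)) \<in> fm.span (om ` Fc I)"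
        by (rule fm.span_sum) (rule fm.span_scale, rule IH)
    qed
    then show "(delta y :: 'x \<Rightarrow> 'k) \<in> fm.span (om ` Fc I)" using eq by simp
  qed
qed

lemma delta_span: "y \<in> Fc I \<Longrightarrow> (delta y :: 'x \<Rightarrow> 'k::comm_ring_1) \<in> fm.span (om ` Fc I)"
  using delta_span_aux by blast

lemma kF_span:
  assumes p: "p \<in> kF Fc I"
  shows "(p :: 'x \<Rightarrow> 'k::comm_ring_1) \<in> fm.span (om ` Fc I)"
proof -
  define P where "P = {x. p x \<noteq> 0}"
  have fP: "finite P" using kF_fin[OF p] unfolding P_def .
  have eq: "p = (\<Sum>y\<in>P. fscale (p y) (delta y))"
  proof (rule ext)
    fix z
    have "(\<Sum>y\<in>P. fscale (p y) (delta y)) z = (\<Sum>y\<in>P. if z = y then p y else 0)"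
      unfolding sum_fun_apply by (rule sum.cong[OF refl]) (simp add: delta_def)
    also have "\<dots> = (if z \<in> P then p z else 0)" using fP by (simp add: sum.delta)
    also have "\<dots> = p z" unfolding P_def by simp
    finally show "p z = (\<Sum>y\<in>P. fscale (p y) (delta y)) z" by simp
  qed
  have "(\<Sum>y\<in>P. fscale (p y) (delta y)) \<in> fm.span (om ` Fc I)"
  proof (rule fm.span_sum, rule fm.span_scale, rule delta_span)
    fix y assume "y \<in> P" then show "y \<in> Fc I" using kF_sub[OF p] unfolding P_def by blast
  qed
  then show ?thesis using eq by simp
qed

end



context setting begin

lemma indep:
  "fm.independent ((\<lambda>x. omega Fc Fle I x :: 'x \<Rightarrow> 'k::comm_ring_1) ` {x\<in>Fc I. box_indecomposable Fc mul I x})"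
  unfolding fm.independent_explicit_module
proof (intro allI impI)
  fix t u v
  assume t: "finite t" "t \<subseteq> (\<lambda>x. omega Fc Fle I x :: 'x \<Rightarrow> 'k) ` {x\<in>Fc I. box_indecomposable Fc mul I x}"
    and s: "(\<Sum>v\<in>t. fscale (u v) v) = 0" and v: "v \<in> t"
  obtain w where w: "w \<in> Fc I" "v = om w" using t(2) v by blast
  have t': "t \<subseteq> om ` Fc I" using t(2) by blast
  have "psi w (\<Sum>v\<in>t. fscale (u v) v) = u (om w)"
    by (rule coef[OF t(1) t' w(1)]) (use v w in simp)
  moreover have "psi w (\<Sum>v\<in>t. fscale (u v) v) = 0" unfolding s zero_fun_def by (rule psi_zero)
  ultimately show "u v = 0" using w by simp
qed

lemma span_sub:
  "fm.span ((\<lambda>x. omega Fc Fle I x :: 'x \<Rightarrow> 'k::field) ` {x\<in>Fc I. box_indecomposable Fc mul I x})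
     \<subseteq> {p. primitive Fc comul I p}"
proof
  fix p :: "'x \<Rightarrow> 'k"
  assume "p \<in> fm.span ((\<lambda>x. omega Fc Fle I x :: 'x \<Rightarrow> 'k) ` {x\<in>Fc I. box_indecomposable Fc mul I x})"
  then obtain t r where t: "finite t" "t \<subseteq> (\<lambda>x. omega Fc Fle I x :: 'x \<Rightarrow> 'k) ` {x\<in>Fc I. box_indecomposable Fc mul I x}"
    and p: "p = (\<Sum>a\<in>t. fscale (r a) a)"
    unfolding fm.span_explicit by blast
  have prim: "primitive Fc comul I a" if "a \<in> t" for a
  proof -
    obtain x where x: "x \<in> Fc I" "box_indecomposable Fc mul I x" "a = om x" using t(2) \<open>a \<in> t\<close> by blast
    then show ?thesis using prim_iff[OF x(1)] by simp
  qed
  have kf: "\<forall>i\<in>t. id i \<in> kF Fc I" using prim unfolding primitive_def by simp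
  have "p \<in> kF Fc I" unfolding p using lin_kF[OF t(1) kf, of r] by simp
  moreover have "comul_lin comul S T p = (\<lambda>_. 0)"
    if d: "S \<noteq> {}" "T \<noteq> {}" "S \<inter> T = {}" "S \<union> T = I" for S T
  proof (rule ext)
    fix yz
    have "comul_lin comul S T p yz = (\<Sum>a\<in>t. r a * comul_lin comul S T (id a) yz)"
      unfolding p using comul_lin_lin[OF t(1) kf, of S T r yz] by simp
    also have "\<dots> = 0"
    proof (rule sum.neutral, intro ballI)
      fix a assume "a \<in> t"
      then have "comul_lin comul S T a = (\<lambda>_. 0)" using prim d unfolding primitive_def by blast
      then show "r a * comul_lin comul S T (id a) yz = 0" by simp
    qed
    finally show "comul_lin comul S T p yz = 0" .
  qed
  ultimately show "p \<in> {p. primitive Fc comul I p}" unfolding primitive_def by blast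
qed

lemma span_sup:
  "{p. primitive Fc comul I p} \<subseteq>
     fm.span ((\<lambda>x. omega Fc Fle I x :: 'x \<Rightarrow> 'k::field) ` {x\<in>Fc I. box_indecomposable Fc mul I x})"
proof
  fix p :: "'x \<Rightarrow> 'k"
  assume "p \<in> {p. primitive Fc comul I p}"
  then have pr: "primitive Fc comul I p" by simp
  then have pk: "p \<in> kF Fc I" unfolding primitive_def by blast
  have "p \<in> fm.span (om ` Fc I)" by (rule kF_span[OF pk])
  then obtain t r where t: "finite t" "t \<subseteq> om ` Fc I" and p: "p = (\<Sum>a\<in>t. fscale (r a) a)"
    unfolding fm.span_explicit by blast
  let ?B = "(\<lambda>x. omega Fc Fle I x :: 'x \<Rightarrow> 'k) ` {x\<in>Fc I. box_indecomposable Fc mul I x}"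
  have r0: "r a = 0" if a: "a \<in> t - ?B" for a
  proof -
    obtain w where w: "w \<in> Fc I" "a = om w" using a t(2) by blast
    then have "\<not> box_indecomposable Fc mul I w" using a by blast
    then obtain S T y z where d: "S \<noteq> {}" "T \<noteq> {}" "S \<inter> T = {}" "S \<union> T = I" "y \<in> Fc S" "z \<in> Fc T" "w = mul S T y z"
      unfolding box_indecomposable_def by blast
    have "comul_lin comul S T p = (\<lambda>_. 0)" using pr d unfolding primitive_def by blast
    then have "Phi S T y z (comul_lin comul S T p) = 0" by (simp add: Phi_zero)
    moreover have "Phi S T y z (comul_lin comul S T p) = psi w p"
      using Phi_comul[OF d(4) d(3) d(5) d(6) pk] d(7) by simp
    moreover have "psi w p = r (om w)" unfolding p by (rule coef[OF t w(1)]) (use a w in simp)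
    ultimately show ?thesis using w by simp
  qed
  have "p = (\<Sum>a\<in>t \<inter> ?B. fscale (r a) a)"
    unfolding p
  proof (rule sum.mono_neutral_right[OF t(1)])
    show "t \<inter> ?B \<subseteq> t" by blast
    show "\<forall>i\<in>t - t \<inter> ?B. fscale (r i) i = 0"
    proof
      fix i assume "i \<in> t - t \<inter> ?B"
      then have "r i = 0" using r0 by blast
      then show "fscale (r i) i = 0" by (simp add: fscale_def zero_fun_def)
    qed
  qed
  moreover have "(\<Sum>a\<in>t \<inter> ?B. fscale (r a) a) \<in> fm.span ?B"
    by (rule fm.span_sum, rule fm.span_scale, rule fm.span_base) blast
  ultimately show "p \<in> fm.span ?B" by simp
qed

end

theorem mainTheorem4:
  fixes Fc :: "'l set \<Rightarrow> 'x set"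
    and Fle :: "'l set \<Rightarrow> 'x \<Rightarrow> 'x \<Rightarrow> bool"
    and Fact :: "('l \<Rightarrow> 'l) \<Rightarrow> 'l set \<Rightarrow> 'x \<Rightarrow> 'x"
    and e :: 'x
    and mul :: "'l set \<Rightarrow> 'l set \<Rightarrow> 'x \<Rightarrow> 'x \<Rightarrow> 'x"
    and comul :: "'l set \<Rightarrow> 'l set \<Rightarrow> 'x \<Rightarrow> 'x \<times> 'x"
    and I :: "'l set"
  assumes "poset_comonoid Fc Fle Fact e comul"
    and "poset_monoid Fc Fle Fact e mul"
    and "adjoint_pair Fc Fle comul mul"
    and "finite I"
    and "\<forall>x\<in>Fc I. finite {y\<in>Fc I. Fle I x y}"
  shows "(\<forall>x\<in>Fc I. primitive Fc comul I (omega Fc Fle I x :: 'x \<Rightarrow> 'k::field_char_0)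
                     \<longleftrightarrow> box_indecomposable Fc mul I x)
       \<and> Modules.module.independent fscale
             ((\<lambda>x. omega Fc Fle I x :: 'x \<Rightarrow> 'k) ` {x\<in>Fc I. box_indecomposable Fc mul I x})
       \<and> Modules.module.span fscale
             ((\<lambda>x. omega Fc Fle I x :: 'x \<Rightarrow> 'k) ` {x\<in>Fc I. box_indecomposable Fc mul I x})
           = {p :: 'x \<Rightarrow> 'k. primitive Fc comul I p}"
proof -
  interpret S: setting Fc Fle Fact e mul comul I
    by (rule setting.intro[OF assms])
  show ?thesis
  proof (intro conjI)
    show "\<forall>x\<in>Fc I. primitive Fc comul I (omega Fc Fle I x :: 'x \<Rightarrow> 'k) \<longleftrightarrow> box_indecomposable Fc mul I x"
      using S.prim_iff by blast
    show "Modules.module.independent fscale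
             ((\<lambda>x. omega Fc Fle I x :: 'x \<Rightarrow> 'k) ` {x\<in>Fc I. box_indecomposable Fc mul I x})"
      by (rule S.indep)
    show "Modules.module.span fscale
             ((\<lambda>x. omega Fc Fle I x :: 'x \<Rightarrow> 'k) ` {x\<in>Fc I. box_indecomposable Fc mul I x})
           = {p :: 'x \<Rightarrow> 'k. primitive Fc comul I p}"
      using S.span_sub S.span_sup by (rule subset_antisym)
  qed
qed


end
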